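(* Let $h$ be a binary function symbol interpreted as associative and idempotent, and let $a,b$ be distinct free constants. Let $t$ be a term of the form $h(t_1,t_2)$ or $h(t_2,t_1)$, where $t_1\in\{a,b\}$ and $t_2$ is an arbitrary term. Then $t$ is not an $AI$-generalization of $h(a,b)$ and $h(b,a)$, i.e. $t\notin \mathcal{G}_{AI}(h(a,b),h(b,a))$.
   Context: Terms are built from a countable set of variables and a set of function symbols with fixed arities; substitutions map variables to terms, are the identity on all but finitely many variables, and are extended homomorphically to terms (written postfix, $t\sigma$). $AI$ denotes the equational theory generated by $h(x,h(y,z)) = h(h(x,y),z)$ and $h(x,x)=x$ (all other symbols free), and $s\approx_{AI} t$ means $s=t$ holds in every model of these axioms. A term $r$ is an $AI$-generalization of terms $s$ and $t$ if there exist substitutions $\sigma,\tau$ with $r\sigma\approx_{AI} s$ and $r\tau\approx_{AI} t$; $\mathcal{G}_{AI}(s,t)$ is the set of all such $r$. *)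

theory Defs
  imports Main
begin

datatype 'f trm = Var nat | Fun 'f "'f trm list"

fun wf_trm :: "('f \<Rightarrow> nat) \<Rightarrow> 'f trm \<Rightarrow> bool" where
  "wf_trm ar (Var x) = True"
| "wf_trm ar (Fun f ts) = (length ts = ar f \<and> (\<forall>t\<in>set ts. wf_trm ar t))"

fun subst_apply :: "'f trm \<Rightarrow> (nat \<Rightarrow> 'f trm) \<Rightarrow> 'f trm" where
  "subst_apply (Var x) \<sigma> = \<sigma> x"
| "subst_apply (Fun f ts) \<sigma> = Fun f (map (\<lambda>t. subst_apply t \<sigma>) ts)"

definition is_subst :: "('f \<Rightarrow> nat) \<Rightarrow> (nat \<Rightarrow> 'f trm) \<Rightarrow> bool" where
  "is_subst ar \<sigma> \<longleftrightarrow> finite {x. \<sigma> x \<noteq> Var x} \<and> (\<forall>x. wf_trm ar (\<sigma> x))"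

inductive AI_eq :: "'f \<Rightarrow> 'f trm \<Rightarrow> 'f trm \<Rightarrow> bool" for h :: 'f where
  assoc: "AI_eq h (Fun h [x, Fun h [y, z]]) (Fun h [Fun h [x, y], z])"
| idem: "AI_eq h (Fun h [x, x]) x"
| refl: "AI_eq h s s"
| sym: "AI_eq h s t \<Longrightarrow> AI_eq h t s"
| trans: "AI_eq h s t \<Longrightarrow> AI_eq h t u \<Longrightarrow> AI_eq h s u"
| cong: "list_all2 (AI_eq h) ss ts \<Longrightarrow> AI_eq h (Fun f ss) (Fun f ts)"

definition AI_gens :: "('f \<Rightarrow> nat) \<Rightarrow> 'f \<Rightarrow> 'f trm \<Rightarrow> 'f trm \<Rightarrow> 'f trm set" where
  "AI_gens ar h s t = {r. \<exists>\<sigma> \<tau>. is_subst ar \<sigma> \<and> is_subst ar \<tau> \<and>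
       AI_eq h (subst_apply r \<sigma>) s \<and> AI_eq h (subst_apply r \<tau>) t}"

end

theory Submission
  imports Defs
begin

fun fst_leaf :: "'f \<Rightarrow> 'f trm \<Rightarrow> 'f trm" where
  "fst_leaf h (Fun f [x, y]) = (if f = h then fst_leaf h x else Fun f [x, y])"
| "fst_leaf h t = t"

fun lst_leaf :: "'f \<Rightarrow> 'f trm \<Rightarrow> 'f trm" where
  "lst_leaf h (Fun f [x, y]) = (if f = h then lst_leaf h y else Fun f [x, y])"
| "lst_leaf h t = t"

lemma AI_inv:
  assumes "AI_eq h s t"
  shows "(fst_leaf h s = Fun c [] \<longleftrightarrow> fst_leaf h t = Fun c []) \<and>
         (lst_leaf h s = Fun c [] \<longleftrightarrow> lst_leaf h t = Fun c [])"
  using assms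
proof (induction rule: AI_eq.induct)
  case (cong ss ts f)
  have len: "length ss = length ts" using cong list_all2_lengthD by blast
  show ?case
  proof (cases "f = h \<and> length ss = 2")
    case True
    then obtain s1 s2 t1 t2 where e: "ss = [s1, s2]" "ts = [t1, t2]" using len
      by (metis (no_types, lifting) One_nat_def Suc_1 length_0_conv length_Suc_conv)
    with cong True show ?thesis by auto
  next
    case False
    have A: "fst_leaf h (Fun f xs) = (if f = h \<and> length xs = 2 then fst_leaf h (hd xs) else Fun f xs)"
      for xs by (cases "(h, Fun f xs)" rule: fst_leaf.cases) (auto simp: numeral_2_eq_2)
    have B: "lst_leaf h (Fun f xs) = (if f = h \<and> length xs = 2 then lst_leaf h (last xs) else Fun f xs)"
      for xs by (cases "(h, Fun f xs)" rule: lst_leaf.cases) (auto simp: numeral_2_eq_2)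
    from False len show ?thesis unfolding A B by auto
  qed
qed auto

theorem lemma2:
  fixes ar :: "'f \<Rightarrow> nat" and h a b :: 'f and t t1 t2 :: "'f trm"
  assumes "ar h = 2" and "ar a = 0" and "ar b = 0" and "a \<noteq> b"
    and "t1 \<in> {Fun a [], Fun b []}"
    and "wf_trm ar t2"
    and "t = Fun h [t1, t2] \<or> t = Fun h [t2, t1]"
  shows "t \<notin> AI_gens ar h (Fun h [Fun a [], Fun b []]) (Fun h [Fun b [], Fun a []])"
proof
  assume "t \<in> AI_gens ar h (Fun h [Fun a [], Fun b []]) (Fun h [Fun b [], Fun a []])"
  then obtain \<sigma> \<tau> where s: "AI_eq h (subst_apply t \<sigma>) (Fun h [Fun a [], Fun b []])"
    and u: "AI_eq h (subst_apply t \<tau>) (Fun h [Fun b [], Fun a []])"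
    unfolding AI_gens_def by blast
  from assms(5) obtain c where c: "t1 = Fun c []" "c = a \<or> c = b" by auto
  from assms(7) show False
  proof
    assume "t = Fun h [t1, t2]"
    then show False using AI_inv[OF s, of c] AI_inv[OF u, of c] c assms(4) by auto
  next
    assume "t = Fun h [t2, t1]"
    then show False using AI_inv[OF s, of c] AI_inv[OF u, of c] c assms(4) by auto
  qed
qed

end
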